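(* Let $X$ be a separable absolutely neighbourhood star-Hurewicz space. If $Y$ is a closed and discrete subset of $X$, then $|Y|<\mathfrak{b}$.
   Context: All spaces are regular. $St(A,\mathcal{U})=\bigcup\{U\in\mathcal{U}:U\cap A\neq\emptyset\}$. $\mathfrak{b}$ is the bounding number. $X$ is absolutely neighbourhood star-Hurewicz if for each sequence $(\mathcal{U}_n:n\in\omega)$ of open covers of $X$ and each dense subset $D$ of $X$ there is a sequence $(F_n:n\in\omega)$ of finite subsets of $D$ such that for any open sets $O_n$ with $F_n\subseteq O_n$ ($n\in\omega$), every $x\in X$ lies in $St(O_n,\mathcal{U}_n)$ for all but finitely many $n$. *)

theory Defs
  imports "HOL-Analysis.Analysis"
begin

definition star_of :: "'a set \<Rightarrow> 'a set set \<Rightarrow> 'a set" where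
  "star_of A \<U> = \<Union>{U \<in> \<U>. U \<inter> A \<noteq> {}}"

definition open_cover :: "'a topology \<Rightarrow> 'a set set \<Rightarrow> bool" where
  "open_cover X \<U> \<longleftrightarrow> (\<forall>U\<in>\<U>. openin X U) \<and> \<Union>\<U> = topspace X"

definition abs_nbhd_star_hurewicz :: "'a topology \<Rightarrow> bool" where
  "abs_nbhd_star_hurewicz X \<longleftrightarrow>
    (\<forall>\<U> :: nat \<Rightarrow> 'a set set. \<forall>D.
       (\<forall>n. open_cover X (\<U> n)) \<and> D \<subseteq> topspace X \<and> X closure_of D = topspace X \<longrightarrow>
       (\<exists>F :: nat \<Rightarrow> 'a set. (\<forall>n. finite (F n) \<and> F n \<subseteq> D) \<and>
          (\<forall>W :: nat \<Rightarrow> 'a set. (\<forall>n. openin X (W n) \<and> F n \<subseteq> W n) \<longrightarrow>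
             (\<forall>x\<in>topspace X. \<forall>\<^sub>F n in sequentially. x \<in> star_of (W n) (\<U> n)))))"

definition le_star :: "(nat \<Rightarrow> nat) \<Rightarrow> (nat \<Rightarrow> nat) \<Rightarrow> bool" where
  "le_star f g \<longleftrightarrow> (\<forall>\<^sub>F n in sequentially. f n \<le> g n)"

definition unbounded_family :: "(nat \<Rightarrow> nat) set \<Rightarrow> bool" where
  "unbounded_family F \<longleftrightarrow> \<not> (\<exists>g. \<forall>f\<in>F. le_star f g)"

text \<open>The bounding number b is the least cardinality of an unbounded family;
  so card A < b iff A is strictly smaller than every unbounded family.\<close>
definition card_less_bounding :: "'a set \<Rightarrow> bool" where
  "card_less_bounding A \<longleftrightarrow>
     (\<forall>F :: (nat \<Rightarrow> nat) set. unbounded_family F \<longrightarrow> ordLess2 (card_of A) (card_of F))"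

end

theory Submission
  imports Defs
begin

theorem mainTheorem10:
  fixes X :: "'a topology" and Y :: "'a set"
  assumes "regular_space X" and "t1_space X"
    and "separable_space X" and "abs_nbhd_star_hurewicz X"
    and "closedin X Y" and "subtopology X Y = discrete_topology Y"
  shows "card_less_bounding Y"
  unfolding card_less_bounding_def
proof (intro allI impI)
  fix F :: "(nat \<Rightarrow> nat) set"
  assume unb: "unbounded_family F"
  show "ordLess2 (card_of Y) (card_of F)"
  proof (rule ccontr)
    assume "\<not> ordLess2 (card_of Y) (card_of F)"
    then have "(card_of F, card_of Y) \<in> ordLeq"
      using ordLess_or_ordLeq[OF card_of_Well_order[of Y] card_of_Well_order[of F]] by blast
    then obtain h where hinj: "inj_on h F" and hY: "h ` F \<subseteq> Y"
      using card_of_ordLeq[of F Y] by blast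
    have Ytop: "Y \<subseteq> topspace X" using assms(5) closedin_subset by blast
    have subcl: "closedin X S" if "S \<subseteq> Y" for S
    proof -
      have "closedin (subtopology X Y) S" using assms(6) that by simp
      then show ?thesis using closedin_trans_full assms(5) by blast
    qed
    obtain D where Dc: "countable D" and DX: "D \<subseteq> topspace X"
      and Dd: "X closure_of D = topspace X"
      using assms(3) unfolding separable_space_def by blast
    show False
    proof (cases "D = {}")
      case True
      then have "topspace X = {}" using Dd by simp
      then have "F = {}" using hY Ytop by auto
      then show False using unb unfolding unbounded_family_def by auto
    next
      case Dne: False
      define e where "e = from_nat_into D"
      define idx where "idx = to_nat_on D"
      have e_idx: "e (idx d) = d" if "d \<in> D" for d
        using that Dc unfolding e_def idx_def by simp
      have eD: "e k \<in> D" for k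
        using Dne unfolding e_def by (simp add: from_nat_into)
      have "\<forall>d\<in>topspace X. \<exists>V. openin X V \<and> d \<in> V \<and> disjnt (Y - {d}) (X closure_of V)"
      proof
        fix d assume d: "d \<in> topspace X"
        have "closedin X (Y - {d})" using subcl[of "Y - {d}"] by blast
        then show "\<exists>V. openin X V \<and> d \<in> V \<and> disjnt (Y - {d}) (X closure_of V)"
          using assms(1) d unfolding regular_space by blast
      qed
      from bchoice[OF this] obtain V where
        Vall: "\<forall>d\<in>topspace X. openin X (V d) \<and> d \<in> V d \<and> disjnt (Y - {d}) (X closure_of (V d))"
        by blast
      have Vo: "\<And>d. d \<in> topspace X \<Longrightarrow> openin X (V d)"
        and Vd: "\<And>d. d \<in> topspace X \<Longrightarrow> d \<in> V d"
        and Vdis: "\<And>d. d \<in> topspace X \<Longrightarrow> disjnt (Y - {d}) (X closure_of (V d))"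
        using Vall by auto
      define Ob where "Ob f n = (topspace X - (Y - {h f})) -
          \<Union>{X closure_of V (e i) |i. i \<le> f n \<and> e i \<noteq> h f}" for f n
      define U where "U n = insert (topspace X - h ` F) ((\<lambda>f. Ob f n) ` F)" for n
      have closV: "closedin X (\<Union>{X closure_of V (e i) |i. i \<le> f n \<and> e i \<noteq> h f})" for f n
      proof -
        have "finite {i. i \<le> f n \<and> e i \<noteq> h f}"
          by (rule finite_subset[of _ "{..f n}"]) auto
        then have fin: "finite {X closure_of V (e i) |i. i \<le> f n \<and> e i \<noteq> h f}"
          by (rule finite_image_set)
        show ?thesis by (rule closedin_Union[OF fin]) auto
      qed
      have Oopen: "openin X (Ob f n)" for f n
      proof -
        have "openin X (topspace X - (Y - {h f}))"
          using subcl[of "Y - {h f}"] by (intro openin_diff) auto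
        then show ?thesis unfolding Ob_def using closV by (rule openin_diff)
      qed
      have hfO: "h f \<in> Ob f n" if "f \<in> F" for f n
      proof -
        have hfy: "h f \<in> Y" using that hY by auto
        have "h f \<notin> X closure_of V (e i)" if "e i \<noteq> h f" for i
        proof -
          have "e i \<in> topspace X" using eD DX by auto
          then have "disjnt (Y - {e i}) (X closure_of V (e i))" by (rule Vdis)
          then show ?thesis using hfy that by (auto simp: disjnt_def)
        qed
        then show ?thesis unfolding Ob_def using hfy Ytop by auto
      qed
      have OY: "Ob f n \<inter> Y \<subseteq> {h f}" for f n
        unfolding Ob_def by auto
      have Otop: "Ob f n \<subseteq> topspace X" for f n
        unfolding Ob_def by auto
      have cover: "open_cover X (U n)" for n
      proof -
        have "openin X (topspace X - h ` F)"
          using subcl[OF hY] by (intro openin_diff) auto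
        moreover have "\<Union>(U n) = topspace X"
        proof
          show "\<Union>(U n) \<subseteq> topspace X" unfolding U_def using Otop by auto
          show "topspace X \<subseteq> \<Union>(U n)"
          proof
            fix x assume x: "x \<in> topspace X"
            show "x \<in> \<Union>(U n)"
            proof (cases "x \<in> h ` F")
              case True
              then obtain f where "f \<in> F" "x = h f" by auto
              then show ?thesis using hfO[of f n] unfolding U_def by auto
            next
              case False
              then show ?thesis using x unfolding U_def by auto
            qed
          qed
        qed
        ultimately show ?thesis unfolding open_cover_def U_def using Oopen by auto
      qed
      have "\<exists>Fn :: nat \<Rightarrow> 'a set. (\<forall>n. finite (Fn n) \<and> Fn n \<subseteq> D) \<and>
          (\<forall>W :: nat \<Rightarrow> 'a set. (\<forall>n. openin X (W n) \<and> Fn n \<subseteq> W n) \<longrightarrow>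
             (\<forall>x\<in>topspace X. \<forall>\<^sub>F n in sequentially. x \<in> star_of (W n) (U n)))"
        using assms(4) cover DX Dd unfolding abs_nbhd_star_hurewicz_def by blast
      then obtain Fn where FnD: "\<And>n. finite (Fn n) \<and> Fn n \<subseteq> D"
        and FnP: "\<And>W. (\<forall>n. openin X (W n) \<and> Fn n \<subseteq> W n) \<longrightarrow>
             (\<forall>x\<in>topspace X. \<forall>\<^sub>F n in sequentially. x \<in> star_of (W n) (U n))"
        by blast
      define W where "W n = \<Union>(V ` Fn n)" for n
      have "\<forall>n. openin X (W n) \<and> Fn n \<subseteq> W n"
      proof
        fix n
        have "\<forall>d\<in>Fn n. d \<in> topspace X" using FnD DX by blast
        then show "openin X (W n) \<and> Fn n \<subseteq> W n"
          unfolding W_def using Vo Vd by auto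
      qed
      then have star: "\<forall>x\<in>topspace X. \<forall>\<^sub>F n in sequentially. x \<in> star_of (W n) (U n)"
        using FnP by blast
      define h0 where "h0 n = Max ((\<lambda>k. if e k \<in> h ` F then inv_into F h (e k) n else 0) ` {..n})" for n
      define g where "g n = max (Max (insert 0 (idx ` Fn n))) (h0 n)" for n
      have "le_star f g" if fF: "f \<in> F" for f
      proof -
        have hfX: "h f \<in> topspace X" using fF hY Ytop by auto
        have ev: "\<forall>\<^sub>F n in sequentially. h f \<in> star_of (W n) (U n) \<and> idx (h f) \<le> n"
          using star hfX by (intro eventually_conj eventually_ge_at_top) auto
        show ?thesis unfolding le_star_def
        proof (rule eventually_mono[OF ev])
          fix n assume A: "h f \<in> star_of (W n) (U n) \<and> idx (h f) \<le> n"
          then obtain Uu where Uu: "Uu \<in> U n" "h f \<in> Uu" "Uu \<inter> W n \<noteq> {}"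
            unfolding star_of_def by blast
          then obtain f' where f': "f' \<in> F" "Uu = Ob f' n"
            using fF unfolding U_def by auto
          have "h f \<in> {h f'}" using OY[of f' n] Uu(2) f' fF hY by auto
          then have "f = f'" using hinj fF f'(1) by (auto dest: inj_onD)
          then obtain z d where z: "z \<in> Ob f n" "d \<in> Fn n" "z \<in> V d"
            using Uu(3) f' unfolding W_def by auto
          have dD: "d \<in> D" using z FnD by auto
          have edi: "e (idx d) = d" using e_idx dD by blast
          have "idx d \<le> Max (insert 0 (idx ` Fn n))"
            using FnD[of n] z(2) by (intro Max_ge) auto
          then have g1: "idx d \<le> g n" unfolding g_def by linarith
          show "f n \<le> g n"
          proof (cases "f n < idx d")
            case True then show ?thesis using g1 by linarith
          next
            case False
            show ?thesis
            proof (cases "d = h f")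
              case True
              have k: "idx (h f) \<in> {..n}" using A by simp
              have "(if e (idx (h f)) \<in> h ` F then inv_into F h (e (idx (h f))) n else 0) = f n"
                using True edi hinj fF by simp
              then have "f n \<in> (\<lambda>k. if e k \<in> h ` F then inv_into F h (e k) n else 0) ` {..n}"
                by (rule image_eqI[OF sym k])
              then have "f n \<le> h0 n" unfolding h0_def
                by (rule Max_ge[OF finite_imageI[OF finite_atMost]])
              then show ?thesis unfolding g_def by linarith
            next
              case ne: False
              have dX: "d \<in> topspace X" using dD DX by auto
              have "z \<in> X closure_of V d"
                using z(3) closure_of_subset[OF openin_subset[OF Vo[OF dX]]] by auto
              then have z1: "z \<in> X closure_of V (e (idx d))" by (simp only: edi)
              have c: "idx d \<le> f n \<and> e (idx d) \<noteq> h f" using False ne edi by auto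
              have "X closure_of V (e (idx d)) \<in> {X closure_of V (e i) |i. i \<le> f n \<and> e i \<noteq> h f}"
                by (rule CollectI, rule exI[of _ "idx d"]) (simp only: c simp_thms)
              then have "z \<in> \<Union>{X closure_of V (e i) |i. i \<le> f n \<and> e i \<noteq> h f}"
                using z1 by (rule UnionI)
              then have "z \<notin> Ob f n" unfolding Ob_def by auto
              then show ?thesis using z(1) by (rule notE)
            qed
          qed
        qed
      qed
      then show False using unb unfolding unbounded_family_def by blast
    qed
  qed
qed

end
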